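(* Let $G$ be a finitely generated group, $U$ a finite symmetric generating set of $G$, and $H\leqslant G$ with $[G:H]=d$. Suppose there exist $\alpha,\beta>0$ such that every finite symmetric generating set $V$ of $H$ satisfies $|V^n|\geqslant(\alpha|V|)^{\beta n}$ for every $n\in\mathbb{N}$. Let $m=2d!+1$. Then $$|U^n|\geqslant\bigg(\frac{\alpha}{2^{m/\beta}d}|U|\bigg)^{\frac{\beta n}{m}}$$ for every $n\in\mathbb{N}$.
   Context: $U^n=\{u_1\cdots u_n:u_i\in U\}$; symmetric means $U=U^{-1}$. *)

theory Defs
  imports Complex_Main "HOL-Algebra.Algebra"
begin

definition set_power :: "('a, 'b) monoid_scheme \<Rightarrow> 'a set \<Rightarrow> nat \<Rightarrow> 'a set" where
  "set_power G U n = {foldr (\<otimes>\<^bsub>G\<^esub>) us \<one>\<^bsub>G\<^esub> | us. length us = n \<and> set us \<subseteq> U}"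

definition symmetric_set :: "('a, 'b) monoid_scheme \<Rightarrow> 'a set \<Rightarrow> bool" where
  "symmetric_set G U \<longleftrightarrow> (\<lambda>x. inv\<^bsub>G\<^esub> x) ` U = U"

end

theory Submission
  imports Defs
begin

context group begin

lemma sp_0: "set_power G U 0 = {\<one>}"
  by (auto simp: set_power_def)

lemma sp_Suc: "set_power G U (Suc n) = {u \<otimes> w | u w. u \<in> U \<and> w \<in> set_power G U n}"
proof (rule Set.set_eqI, rule iffI)
  fix x assume "x \<in> set_power G U (Suc n)"
  then obtain us where "length us = Suc n" "set us \<subseteq> U" "x = foldr (\<otimes>) us \<one>"
    by (auto simp: set_power_def)
  then show "x \<in> {u \<otimes> w | u w. u \<in> U \<and> w \<in> set_power G U n}"
    by (cases us) (auto simp: set_power_def)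
next
  fix x assume "x \<in> {u \<otimes> w | u w. u \<in> U \<and> w \<in> set_power G U n}"
  then obtain u us where "u \<in> U" "length us = n" "set us \<subseteq> U" "x = u \<otimes> foldr (\<otimes>) us \<one>"
    by (auto simp: set_power_def)
  then show "x \<in> set_power G U (Suc n)" unfolding set_power_def
    by (intro CollectI exI[of _ "u # us"]) auto
qed

lemma sp_carrier: "U \<subseteq> carrier G \<Longrightarrow> set_power G U n \<subseteq> carrier G"
  by (induction n) (auto simp: sp_0 sp_Suc)

lemma sp_1: "U \<subseteq> carrier G \<Longrightarrow> set_power G U 1 = U"
  by (auto simp: sp_Suc sp_0 subsetD) (metis r_one subsetD)

lemma sp_add: assumes "U \<subseteq> carrier G"
  shows "set_power G U (a + b) = {x \<otimes> y | x y. x \<in> set_power G U a \<and> y \<in> set_power G U b}"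
proof (induction a)
  case 0
  then show ?case using sp_carrier[OF assms, of b] by (force simp: sp_0)
next
  case (Suc a)
  have c: "\<And>n. set_power G U n \<subseteq> carrier G" using sp_carrier[OF assms] .
  show ?case
  proof (intro Set.set_eqI iffI)
    fix z assume "z \<in> set_power G U (Suc a + b)"
    then obtain u w where "u \<in> U" "w \<in> set_power G U (a + b)" "z = u \<otimes> w" by (auto simp: sp_Suc)
    with Suc obtain x y where "x \<in> set_power G U a" "y \<in> set_power G U b" "w = x \<otimes> y" by auto
    then show "z \<in> {x \<otimes> y | x y. x \<in> set_power G U (Suc a) \<and> y \<in> set_power G U b}"
    proof -
      have "u \<otimes> x \<in> set_power G U (Suc a)" using \<open>u \<in> U\<close> \<open>x \<in> set_power G U a\<close> by (auto simp: sp_Suc)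
      moreover have "z = (u \<otimes> x) \<otimes> y" using \<open>u \<in> U\<close> \<open>z = u \<otimes> w\<close> \<open>w = x \<otimes> y\<close> c assms
        \<open>x \<in> set_power G U a\<close> \<open>y \<in> set_power G U b\<close> by (metis m_assoc subsetD)
      ultimately show ?thesis using \<open>y \<in> set_power G U b\<close> by blast
    qed
  next
    fix z assume "z \<in> {x \<otimes> y | x y. x \<in> set_power G U (Suc a) \<and> y \<in> set_power G U b}"
    then obtain u x y where h: "u \<in> U" "x \<in> set_power G U a" "y \<in> set_power G U b" "z = (u \<otimes> x) \<otimes> y"
      by (auto simp: sp_Suc)
    have xy: "x \<otimes> y \<in> set_power G U (a + b)" using Suc h by auto
    have "z = u \<otimes> (x \<otimes> y)" using h c assms by (metis m_assoc subsetD)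
    then show "z \<in> set_power G U (Suc a + b)" unfolding add_Suc sp_Suc using h xy by blast
  qed
qed

lemma sp_mult: "U \<subseteq> carrier G \<Longrightarrow> x \<in> set_power G U a \<Longrightarrow> y \<in> set_power G U b \<Longrightarrow> x \<otimes> y \<in> set_power G U (a + b)"
  using sp_add by blast

lemma sp_finite: "finite U \<Longrightarrow> finite (set_power G U n)"
proof (induction n)
  case 0 then show ?case by (simp add: sp_0)
next
  case (Suc n)
  have "set_power G U (Suc n) = (\<lambda>(u, w). u \<otimes> w) ` (U \<times> set_power G U n)"
    by (auto simp: sp_Suc)
  then show ?case using Suc by simp
qed

lemma sp_card_mult: assumes "U \<subseteq> carrier G" "finite U"
  shows "card (set_power G U (a + b)) \<le> card (set_power G U a) * card (set_power G U b)"
proof -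
  have "set_power G U (a + b) = (\<lambda>(x, y). x \<otimes> y) ` (set_power G U a \<times> set_power G U b)"
    using sp_add[OF assms(1)] by auto
  then have "card (set_power G U (a + b)) \<le> card (set_power G U a \<times> set_power G U b)"
    by (metis card_image_le finite_cartesian_product sp_finite assms(2))
  then show ?thesis by (simp add: card_cartesian_product)
qed

lemma sp_nonempty: "U \<noteq> {} \<Longrightarrow> set_power G U n \<noteq> {}"
  by (induction n) (auto simp: sp_0 sp_Suc)

lemma sp_card_mono: assumes "U \<subseteq> carrier G" "finite U" "U \<noteq> {}" "a \<le> b"
  shows "card (set_power G U a) \<le> card (set_power G U b)"
proof -
  obtain k where b: "b = a + k" using assms(4) le_Suc_ex by blast
  obtain w where w: "w \<in> set_power G U k" using sp_nonempty[OF assms(3)] by blast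
  have wc: "w \<in> carrier G" using w sp_carrier[OF assms(1)] by blast
  have "inj_on (\<lambda>x. x \<otimes> w) (set_power G U a)"
    using wc sp_carrier[OF assms(1)] by (intro inj_onI) (metis r_cancel subsetD)
  moreover have "(\<lambda>x. x \<otimes> w) ` set_power G U a \<subseteq> set_power G U b"
    using b w sp_mult[OF assms(1)] by auto
  ultimately show ?thesis using card_inj_on_le sp_finite[OF assms(2)] by blast
qed

lemma sp_inv: assumes "U \<subseteq> carrier G" "symmetric_set G U"
  shows "x \<in> set_power G U n \<Longrightarrow> inv x \<in> set_power G U n"
proof (induction n arbitrary: x)
  case 0 then show ?case by (simp add: sp_0)
next
  case (Suc n)
  then obtain u w where uw: "u \<in> U" "w \<in> set_power G U n" "x = u \<otimes> w" by (auto simp: sp_Suc)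
  have c: "u \<in> carrier G" "w \<in> carrier G" using uw assms(1) sp_carrier[OF assms(1)] by auto
  have "inv u \<in> U" using assms(2) uw(1) unfolding symmetric_set_def by blast
  then have "inv u \<in> set_power G U 1" using sp_1[OF assms(1)] by simp
  then have "inv w \<otimes> inv u \<in> set_power G U (n + 1)" using Suc.IH[OF uw(2)] sp_mult[OF assms(1)] by blast
  then show ?case using uw c by (simp add: inv_mult_group)
qed

lemma generate_sp: assumes "U \<subseteq> carrier G" "symmetric_set G U"
  shows "x \<in> generate G U \<Longrightarrow> \<exists>n. x \<in> set_power G U n"
proof (induction rule: generate.induct)
  case one then show ?case using sp_0 by blast
next
  case (incl h) then show ?case using sp_1[OF assms(1)] by blast
next
  case (inv h)
  then have "inv h \<in> U" using assms(2) unfolding symmetric_set_def by blast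
  then show ?case using sp_1[OF assms(1)] by blast
next
  case (eng h1 h2) then show ?case using sp_mult[OF assms(1)] by blast
qed


definition sball :: "'a set \<Rightarrow> nat \<Rightarrow> 'a set" where
  "sball U k = (\<Union>i\<le>k. set_power G U i)"

lemma sball_carrier: "U \<subseteq> carrier G \<Longrightarrow> sball U k \<subseteq> carrier G"
  using sp_carrier by (auto simp: sball_def)

lemma sball_mult: "U \<subseteq> carrier G \<Longrightarrow> x \<in> sball U a \<Longrightarrow> y \<in> sball U b \<Longrightarrow> x \<otimes> y \<in> sball U (a + b)"
proof -
  assume a: "U \<subseteq> carrier G" "x \<in> sball U a" "y \<in> sball U b"
  then obtain i j where "i \<le> a" "j \<le> b" "x \<in> set_power G U i" "y \<in> set_power G U j"
    unfolding sball_def by blast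
  then have "x \<otimes> y \<in> set_power G U (i + j)" "i + j \<le> a + b" using sp_mult a(1) by auto
  then show ?thesis unfolding sball_def by blast
qed

lemma sball_inv: "U \<subseteq> carrier G \<Longrightarrow> symmetric_set G U \<Longrightarrow> x \<in> sball U a \<Longrightarrow> inv x \<in> sball U a"
proof -
  assume a: "U \<subseteq> carrier G" "symmetric_set G U" "x \<in> sball U a"
  then obtain i where "i \<le> a" "x \<in> set_power G U i" unfolding sball_def by blast
  then show ?thesis using sp_inv[OF a(1,2)] unfolding sball_def by blast
qed

lemma sball_mono: "a \<le> b \<Longrightarrow> sball U a \<subseteq> sball U b"
  unfolding sball_def by (meson UN_mono atMost_iff order.trans order_refl subsetI)

lemma sp_sball: "set_power G U a \<subseteq> sball U a"
  unfolding sball_def by auto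

lemma sball_finite: "finite U \<Longrightarrow> finite (sball U k)"
  unfolding sball_def using sp_finite by auto

lemma card_sball: assumes "U \<subseteq> carrier G" "finite U" "U \<noteq> {}"
  shows "card (sball U k) \<le> (k + 1) * card (set_power G U k)"
proof -
  have "card (sball U k) \<le> (\<Sum>i\<le>k. card (set_power G U i))"
    unfolding sball_def by (rule card_UN_le) simp
  also have "\<dots> \<le> (\<Sum>i\<le>k. card (set_power G U k))"
    by (intro sum_mono sp_card_mono assms) auto
  finally show ?thesis by simp
qed

lemma sp_sub_sball: assumes "U \<subseteq> carrier G" "V \<subseteq> sball U c"
  shows "set_power G V n \<subseteq> sball U (c * n)"
proof (induction n)
  case 0 then show ?case by (auto simp: sp_0 sball_def)
next
  case (Suc n)
  show ?case
  proof
    fix x assume "x \<in> set_power G V (Suc n)"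
    then obtain v w where "v \<in> V" "w \<in> set_power G V n" "x = v \<otimes> w" by (auto simp: sp_Suc)
    then have "v \<otimes> w \<in> sball U (c + c * n)" using Suc assms by (intro sball_mult) auto
    then show "x \<in> sball U (c * Suc n)" using \<open>x = v \<otimes> w\<close> by simp
  qed
qed

lemma sp_card_pow: assumes "U \<subseteq> carrier G" "finite U"
  shows "card (set_power G U (n * k)) \<le> card (set_power G U n) ^ k"
proof (induction k)
  case 0 then show ?case by (simp add: sp_0)
next
  case (Suc k)
  have "card (set_power G U (n * Suc k)) = card (set_power G U (n + n * k))" by simp
  also have "\<dots> \<le> card (set_power G U n) * card (set_power G U (n * k))"
    by (rule sp_card_mult[OF assms])
  also have "\<dots> \<le> card (set_power G U n) * card (set_power G U n) ^ k"
    using Suc by simp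
  finally show ?case by simp
qed


end

context group begin
lemma sp_Suc_right: assumes "U \<subseteq> carrier G" "w \<in> set_power G U (Suc n)"
  shows "\<exists>w' u. w' \<in> set_power G U n \<and> u \<in> U \<and> w = w' \<otimes> u"
proof -
  have "w \<in> set_power G U (n + 1)" using assms(2) by simp
  then show ?thesis using sp_add[OF assms(1), of n 1] sp_1[OF assms(1)] by auto
qed

lemma cover_closed:
  assumes U: "U \<subseteq> carrier G" "symmetric_set G U" "generate G U = carrier G"
    and H: "subgroup H G"
    and st: "(\<lambda>b. H #> b) ` sball U (Suc j) \<subseteq> (\<lambda>b. H #> b) ` sball U j"
  shows "(\<lambda>b. H #> b) ` sball U j = rcosets H"
proof
  show "(\<lambda>b. H #> b) ` sball U j \<subseteq> rcosets H"
    using sball_carrier[OF U(1)] H by (auto intro!: rcosetsI subgroup.subset)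
next
  have Hc: "H \<subseteq> carrier G" using H subgroup.subset by blast
  have key: "w \<in> set_power G U n \<Longrightarrow> H #> w \<in> (\<lambda>b. H #> b) ` sball U j" for n w
  proof (induction n arbitrary: w)
    case 0
    then have "w = \<one>" by (simp add: sp_0)
    moreover have "\<one> \<in> sball U j" unfolding sball_def using sp_0 by blast
    ultimately show ?case by blast
  next
    case (Suc n)
    then obtain w' u where wu: "w' \<in> set_power G U n" "u \<in> U" "w = w' \<otimes> u"
      using sp_Suc_right[OF U(1)] by blast
    then obtain b where b: "b \<in> sball U j" "H #> w' = H #> b" using Suc.IH by blast
    have c: "w' \<in> carrier G" "u \<in> carrier G" "b \<in> carrier G"
      using wu b sp_carrier[OF U(1)] sball_carrier[OF U(1)] U(1) by blast+
    have "H #> w = (H #> w') #> u" using wu c Hc by (simp add: coset_mult_assoc)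
    also have "\<dots> = H #> (b \<otimes> u)" using b c Hc by (simp add: coset_mult_assoc)
    finally have "H #> w = H #> (b \<otimes> u)" .
    moreover have "b \<otimes> u \<in> sball U (Suc j)"
      using sball_mult[OF U(1) b(1), of u 1] wu(2) sp_1[OF U(1)] sp_sball[of U 1] by auto
    ultimately show ?case using st by auto
  qed
  show "rcosets H \<subseteq> (\<lambda>b. H #> b) ` sball U j"
  proof
    fix Y assume "Y \<in> rcosets H"
    then obtain g where g: "g \<in> carrier G" "Y = H #> g" unfolding RCOSETS_def by blast
    then obtain n where "g \<in> set_power G U n" using generate_sp[OF U(1,2)] U(3) by blast
    then show "Y \<in> (\<lambda>b. H #> b) ` sball U j" using key g by blast
  qed
qed


lemma cover:
  assumes U: "U \<subseteq> carrier G" "symmetric_set G U" "generate G U = carrier G"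
    and H: "subgroup H G" and d: "d \<ge> 1" "card (rcosets H) = d"
  shows "(\<lambda>b. H #> b) ` sball U (d - 1) = rcosets H"
proof -
  let ?C = "\<lambda>j. (\<lambda>b. H #> b) ` sball U j"
  have fin: "finite (rcosets H)"
  proof (rule ccontr)
    assume "infinite (rcosets H)"
    then have "card (rcosets H) = 0" by simp
    then show False using d by simp
  qed
  have Hc: "H \<subseteq> carrier G" using H subgroup.subset by blast
  have sub: "?C j \<subseteq> rcosets H" for j
  proof
    fix Y assume "Y \<in> ?C j"
    then obtain b where "b \<in> sball U j" "Y = H #> b" by blast
    then show "Y \<in> rcosets H" using rcosetsI[OF Hc] sball_carrier[OF U(1)] by blast
  qed
  have mono: "?C j \<subseteq> ?C (Suc j)" for j by (rule image_mono[OF sball_mono]) simp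
  have "?C k = rcosets H \<or> card (?C k) \<ge> k + 1" for k
  proof (induction k)
    case 0
    have "\<one> \<in> sball U 0" unfolding sball_def using sp_0 by blast
    then have "?C 0 \<noteq> {}" by (metis empty_iff image_is_empty)
    then have "card (?C 0) \<ge> 1" using finite_subset[OF sub fin] by (simp add: Suc_leI card_gt_0_iff)
    then show ?case by simp
  next
    case (Suc k)
    show ?case
    proof (cases "?C k = rcosets H")
      case True
      have "rcosets H \<subseteq> ?C (Suc k)" using mono[of k] True by simp
      then show ?thesis using subset_antisym[OF sub[of "Suc k"]] by simp
    next
      case False
      then have ck: "card (?C k) \<ge> k + 1" using Suc by blast
      have "\<not> ?C (Suc k) \<subseteq> ?C k" using cover_closed[OF U H] False by blast
      then have "?C k \<noteq> ?C (Suc k)" by (metis order_refl)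
      then have "?C k \<subset> ?C (Suc k)" by (rule psubsetI[OF mono[of k]])
      then have "card (?C k) < card (?C (Suc k))"
        by (rule psubset_card_mono[OF finite_subset[OF sub fin]])
      then show ?thesis using ck by simp
    qed
  qed
  note all = this
  have "?C (d - 1) = rcosets H \<or> card (?C (d - 1)) \<ge> card (rcosets H)" using all[of "d - 1"] d by simp
  moreover have "card (?C (d - 1)) \<le> card (rcosets H)" using card_mono[OF fin sub] .
  ultimately have "?C (d - 1) = rcosets H \<or> card (?C (d - 1)) = card (rcosets H)" by linarith
  then show ?thesis using card_subset_eq[OF fin sub] by blast
qed


lemma schreier:
  assumes U: "U \<subseteq> carrier G" "symmetric_set G U" "generate G U = carrier G"
    and H: "subgroup H G"
    and cov: "\<And>g. g \<in> carrier G \<Longrightarrow> \<exists>b\<in>sball U t. b \<in> H #> g"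
  shows "generate G (H \<inter> sball U (2 * t + 1)) = H"
proof -
  let ?K = "generate G (H \<inter> sball U (2 * t + 1))"
  have Hc: "H \<subseteq> carrier G" using H subgroup.subset by blast
  have KH: "?K \<subseteq> H" by (rule generate_subgroup_incl[OF _ H]) blast
  have Kc: "?K \<subseteq> carrier G" using KH Hc by (rule order.trans)
  have key: "w \<in> set_power G U n \<Longrightarrow> \<exists>k\<in>?K. \<exists>s\<in>sball U t. w = k \<otimes> s" for n w
  proof (induction n arbitrary: w)
    case 0
    then have "w = \<one>" by (simp add: sp_0)
    moreover have "\<one> \<in> sball U t" using sp_sball[of U 0] sp_0[of U] sball_mono[of 0 t U] by auto
    moreover have "\<one> \<in> ?K" by (rule generate.one)
    ultimately show ?case using l_one[OF one_closed] by metis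
  next
    case (Suc n)
    obtain w' u where wu: "w' \<in> set_power G U n" "u \<in> U" "w = w' \<otimes> u"
      using sp_Suc_right[OF U(1) Suc.prems] by blast
    obtain k s where ks: "k \<in> ?K" "s \<in> sball U t" "w' = k \<otimes> s" using Suc.IH[OF wu(1)] by blast
    have c: "k \<in> carrier G" "s \<in> carrier G" "u \<in> carrier G"
      using subsetD[OF Kc ks(1)] subsetD[OF sball_carrier[OF U(1)] ks(2)] subsetD[OF U(1) wu(2)] by (simp_all only:)
    have su: "s \<otimes> u \<in> carrier G" using c by simp
    obtain s' where s': "s' \<in> sball U t" "s' \<in> H #> (s \<otimes> u)" using cov[OF su] by blast
    have s'c: "s' \<in> carrier G" using subsetD[OF sball_carrier[OF U(1)] s'(1)] .
    have "s' \<otimes> inv (s \<otimes> u) \<in> H"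
      using subgroup.rcos_module_imp[OF H is_group su s'(2)] .
    then have "inv (s' \<otimes> inv (s \<otimes> u)) \<in> H" by (rule subgroup.m_inv_closed[OF H])
    moreover have "inv (s' \<otimes> inv (s \<otimes> u)) = (s \<otimes> u) \<otimes> inv s'"
      using su s'c by (simp add: inv_mult_group)
    ultimately have eH: "(s \<otimes> u) \<otimes> inv s' \<in> H" by simp
    have "u \<in> sball U 1" using wu(2) sp_1[OF U(1)] sp_sball[of U 1] by blast
    then have "s \<otimes> u \<in> sball U (t + 1)" using sball_mult[OF U(1) ks(2)] by blast
    moreover have "inv s' \<in> sball U t" using sball_inv[OF U(1,2) s'(1)] .
    ultimately have "(s \<otimes> u) \<otimes> inv s' \<in> sball U (t + 1 + t)" using sball_mult[OF U(1)] by blast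
    moreover have teq: "t + 1 + t = 2 * t + 1" by simp
    ultimately have "(s \<otimes> u) \<otimes> inv s' \<in> sball U (2 * t + 1)" by (simp only: teq)
    with eH have eK: "(s \<otimes> u) \<otimes> inv s' \<in> ?K" by (intro generate.incl) blast
    have "w = (k \<otimes> ((s \<otimes> u) \<otimes> inv s')) \<otimes> s'"
      using wu ks c s'c by (simp add: m_assoc)
    moreover have "k \<otimes> ((s \<otimes> u) \<otimes> inv s') \<in> ?K" using ks(1) eK by (rule generate.eng)
    ultimately show ?case using s'(1) by blast
  qed
  have "H \<subseteq> ?K"
  proof
    fix h assume h: "h \<in> H"
    have "h \<in> generate G U" using subsetD[OF Hc h] U(3) by simp
    then obtain n where hn: "h \<in> set_power G U n" using generate_sp[OF U(1,2)] by blast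
    obtain k s where ks: "k \<in> ?K" "s \<in> sball U t" "h = k \<otimes> s" using key[OF hn] by blast
    have c: "k \<in> carrier G" "s \<in> carrier G" using subsetD[OF Kc ks(1)] subsetD[OF sball_carrier[OF U(1)] ks(2)] by (simp_all only:)
    have "s = inv k \<otimes> h" using ks(3) c by (simp add: m_assoc[symmetric])
    moreover have "inv k \<in> H" using subgroup.m_inv_closed[OF H subsetD[OF KH ks(1)]] .
    ultimately have "s \<in> H" using subgroup.m_closed[OF H _ h] by metis
    moreover have "s \<in> sball U (2 * t + 1)" using subsetD[OF sball_mono[of t "2 * t + 1" U] ks(2)] by simp
    ultimately have "s \<in> ?K" by (intro generate.incl) blast
    then show "h \<in> ?K" using ks(1,3) generate.eng by metis
  qed
  then show ?thesis using KH by (rule subset_antisym[rotated])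
qed


lemma big_coset:
  assumes U: "U \<subseteq> carrier G" "finite U" "U \<noteq> {}" "symmetric_set G U"
    and H: "subgroup H G" and d: "d \<ge> 1" "card (rcosets H) = d"
  shows "\<exists>V0. V0 \<subseteq> H \<inter> sball U 2 \<and> card U \<le> d * card V0"
proof -
  let ?R = "rcosets H"
  have fin: "finite ?R"
  proof (rule ccontr)
    assume "infinite ?R"
    then have "card ?R = 0" by simp
    then show False using d by simp
  qed
  have Rne: "?R \<noteq> {}" using d by auto
  have "U = (\<Union>C\<in>?R. U \<inter> C)" using rcosets_part_G[OF H] U(1) by blast
  then have "card U \<le> (\<Sum>C\<in>?R. card (U \<inter> C))"
    by (metis card_UN_le fin)
  have "\<exists>C\<in>?R. card U \<le> d * card (U \<inter> C)"
  proof (rule ccontr)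
    assume "\<not> ?thesis"
    then have lt: "\<And>C. C \<in> ?R \<Longrightarrow> d * card (U \<inter> C) < card U" by (simp add: not_le)
    have "d * (\<Sum>C\<in>?R. card (U \<inter> C)) = (\<Sum>C\<in>?R. d * card (U \<inter> C))"
      by (simp add: sum_distrib_left)
    also have "\<dots> < (\<Sum>C\<in>?R. card U)"
      by (rule sum_strict_mono[OF fin Rne lt])
    also have "\<dots> = d * card U" using d by simp
    finally have "(\<Sum>C\<in>?R. card (U \<inter> C)) < card U" by simp
    with \<open>card U \<le> (\<Sum>C\<in>?R. card (U \<inter> C))\<close> show False by simp
  qed
  then obtain C where C: "C \<in> ?R" "card U \<le> d * card (U \<inter> C)" by blast
  have "card (U \<inter> C) \<noteq> 0"
  proof
    assume "card (U \<inter> C) = 0"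
    then have "card U = 0" using C(2) by simp
    then show False using U(2,3) by simp
  qed
  then obtain u0 where u0: "u0 \<in> U" "u0 \<in> C" by (metis IntE card.empty ex_in_conv)
  obtain g where g: "g \<in> carrier G" "C = H #> g" using C(1) unfolding RCOSETS_def by blast
  have u0c: "u0 \<in> carrier G" using subsetD[OF U(1) u0(1)] .
  have Cu0: "C = H #> u0" using repr_independence[OF _ g(1) H] u0(2) g(2) by simp
  let ?f = "\<lambda>u. u \<otimes> inv u0"
  have inj: "inj_on ?f (U \<inter> C)"
  proof (rule inj_onI)
    fix x y assume "x \<in> U \<inter> C" "y \<in> U \<inter> C" "x \<otimes> inv u0 = y \<otimes> inv u0"
    moreover have "x \<in> carrier G" "y \<in> carrier G" using calculation(1,2) U(1) by auto
    ultimately show "x = y" using u0c by (metis inv_closed r_cancel)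
  qed
  have "?f ` (U \<inter> C) \<subseteq> H \<inter> sball U 2"
  proof
    fix z assume "z \<in> ?f ` (U \<inter> C)"
    then obtain u where u: "u \<in> U" "u \<in> C" "z = u \<otimes> inv u0" by blast
    have uc: "u \<in> carrier G" using subsetD[OF U(1) u(1)] .
    have "u \<otimes> inv u0 \<in> H" using subgroup.rcos_module_imp[OF H is_group u0c] u(2) Cu0 by simp
    moreover have "inv u0 \<in> U" using U(4) u0(1) unfolding symmetric_set_def by blast
    then have "u \<otimes> inv u0 \<in> set_power G U (1 + 1)" using sp_mult[OF U(1), of u 1 "inv u0" 1] sp_1[OF U(1)] u(1) by simp
    then have "u \<otimes> inv u0 \<in> sball U (1 + 1)" by (rule subsetD[OF sp_sball])
    then have "u \<otimes> inv u0 \<in> sball U 2" by (simp only: one_add_one)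
    ultimately show "z \<in> H \<inter> sball U 2" using u(3) by simp
  qed
  moreover have "card (?f ` (U \<inter> C)) = card (U \<inter> C)" using card_image[OF inj] .
  ultimately show ?thesis using C(2) by metis
qed


lemma main_comb:
  assumes U: "U \<subseteq> carrier G" "finite U" "U \<noteq> {}" "symmetric_set G U" "generate G U = carrier G"
    and H: "subgroup H G" and d: "d \<ge> 1" "card (rcosets H) = d"
    and m: "m = 2 * fact d + 1" and V: "V = H \<inter> sball U m"
  shows "finite V \<and> V \<subseteq> H \<and> symmetric_set G V \<and> generate G V = H \<and> card U \<le> d * card V
     \<and> (\<forall>N. card (set_power G V N) \<le> (m * N + 1) * card (set_power G U N) ^ m)"
proof -
  have Hc: "H \<subseteq> carrier G" using H subgroup.subset by blast
  have cv: "(\<lambda>b. H #> b) ` sball U (d - 1) = rcosets H" by (rule cover[OF U(1,4,5) H d])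
  have dfact: "d - 1 \<le> fact d" using fact_ge_self[of d] by simp
  have cov: "\<exists>b\<in>sball U (fact d). b \<in> H #> g" if g: "g \<in> carrier G" for g
  proof -
    have "H #> g \<in> rcosets H" using rcosetsI[OF Hc g] .
    then obtain b where b: "b \<in> sball U (d - 1)" "H #> g = H #> b" using cv by (metis imageE)
    have bc: "b \<in> carrier G" using subsetD[OF sball_carrier[OF U(1)] b(1)] .
    have "b \<in> H #> g" using rcos_self[OF bc H] b(2) by simp
    moreover have "b \<in> sball U (fact d)" using subsetD[OF sball_mono[OF dfact] b(1)] .
    ultimately show ?thesis by blast
  qed
  have gen: "generate G V = H" unfolding V m by (rule schreier[OF U(1,4,5) H cov])
  have finV: "finite V" unfolding V using sball_finite[OF U(2)] by simp
  have VH: "V \<subseteq> H" unfolding V by simp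
  have Vb: "V \<subseteq> sball U m" unfolding V by simp
  have invV: "inv x \<in> V" if "x \<in> V" for x
  proof -
    have "inv x \<in> H" using that VH subgroup.m_inv_closed[OF H] by blast
    moreover have "inv x \<in> sball U m" using sball_inv[OF U(1,4)] that Vb by blast
    ultimately show ?thesis unfolding V by simp
  qed
  have symV: "symmetric_set G V"
    unfolding symmetric_set_def
  proof (rule Set.set_eqI, rule iffI)
    fix x assume "x \<in> (\<lambda>x. inv x) ` V"
    then show "x \<in> V" using invV by blast
  next
    fix x assume x: "x \<in> V"
    have "x = inv (inv x)" using subsetD[OF Hc subsetD[OF VH x]] by simp
    then show "x \<in> (\<lambda>x. inv x) ` V" using invV[OF x] by blast
  qed
  obtain V0 where V0: "V0 \<subseteq> H \<inter> sball U 2" "card U \<le> d * card V0"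
    using big_coset[OF U(1,2,3,4) H d] by blast
  have "2 \<le> m" unfolding m using fact_ge_1[of d] by simp
  then have "V0 \<subseteq> V" using V0(1) sball_mono[of 2 m U] unfolding V by blast
  then have "card V0 \<le> card V" using card_mono finV by blast
  then have cardV: "card U \<le> d * card V" using V0(2) by (meson le_trans mult_le_mono2)
  have bound: "card (set_power G V N) \<le> (m * N + 1) * card (set_power G U N) ^ m" for N
  proof -
    have "set_power G V N \<subseteq> sball U (m * N)" by (rule sp_sub_sball[OF U(1) Vb])
    then have "card (set_power G V N) \<le> card (sball U (m * N))"
      using card_mono sball_finite[OF U(2)] by blast
    also have "\<dots> \<le> (m * N + 1) * card (set_power G U (m * N))"
      by (rule card_sball[OF U(1,2,3)])
    also have "card (set_power G U (m * N)) \<le> card (set_power G U N) ^ m"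
      using sp_card_pow[OF U(1,2), of N m] by (simp add: mult.commute)
    then have "(m * N + 1) * card (set_power G U (m * N)) \<le> (m * N + 1) * card (set_power G U N) ^ m"
      by (rule mult_le_mono2)
    finally show ?thesis .
  qed
  show ?thesis using finV VH symV gen cardV bound by blast
qed

end

theorem proposition2p34:
  fixes G :: "('a, 'b) monoid_scheme" and U H :: "'a set" and d :: nat and \<alpha> \<beta> :: real
  assumes "group G"
    and "finite U" and "U \<subseteq> carrier G" and "symmetric_set G U" and "generate G U = carrier G"
    and "subgroup H G" and "d \<ge> 1" and "card (rcosets\<^bsub>G\<^esub> H) = d"
    and "\<alpha> > 0" and "\<beta> > 0"
    and "\<forall>V. finite V \<and> V \<subseteq> H \<and> symmetric_set G V \<and> generate G V = H \<longrightarrow>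
           (\<forall>n::nat. real (card (set_power G V n)) \<ge> (\<alpha> * real (card V)) powr (\<beta> * real n))"
  shows "\<forall>n::nat. real (card (set_power G U n)) \<ge>
           (\<alpha> / (2 powr (real (2 * fact d + 1) / \<beta>) * real d) * real (card U))
             powr (\<beta> * real n / real (2 * fact d + 1))"
proof
  fix N :: nat
  interpret group G by fact
  define m :: nat where "m = 2 * fact d + 1"
  define V where "V = H \<inter> sball U m"
  define L where "L = real (card (set_power G U N))"
  define x where "x = \<alpha> * real (card U) / real d"
  have mpos: "m \<ge> 1" unfolding m_def by simp
  have dpos: "real d > 0" using assms(7) by simp
  have base: "\<alpha> / (2 powr (real m / \<beta>) * real d) * real (card U) = x / 2 powr (real m / \<beta>)"
    unfolding x_def by (simp add: field_simps)
  show "real (card (set_power G U N)) \<ge> (\<alpha> / (2 powr (real (2 * fact d + 1) / \<beta>) * real d) * real (card U))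
             powr (\<beta> * real N / real (2 * fact d + 1))"
  proof (cases "U = {}")
    case True
    then show ?thesis by simp
  next
    case Une: False
    show ?thesis
    proof (cases "N = 0")
      case True
      then show ?thesis by (simp add: sp_0)
    next
      case Npos: False
      have "card (set_power G U N) > 0"
        using sp_nonempty[OF Une, of N] sp_finite[OF assms(2), of N] card_gt_0_iff by blast
      then have L1: "L \<ge> 1" unfolding L_def by simp
      have xpos: "x > 0" unfolding x_def using assms(9) dpos Une assms(2) by (simp add: card_gt_0_iff)
      have two: "(2 powr (real m / \<beta>)) powr (\<beta> * real N / real m) = 2 ^ N"
        using assms(10) mpos by (simp add: powr_powr powr_realpow)
      define y where "y = x powr (\<beta> * real N / real m) / 2 ^ N"
      have rhs: "(x / 2 powr (real m / \<beta>)) powr (\<beta> * real N / real m) = y"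
        unfolding y_def using xpos by (simp add: powr_divide two)
      have "y \<le> L"
      proof (cases "x \<le> 1")
        case True
        have "x powr (\<beta> * real N / real m) \<le> 1"
          using True xpos assms(10) by (intro powr_le1) auto
        then have "y \<le> 1" unfolding y_def by (simp add: field_simps order_trans[OF _ one_le_power])
        then show ?thesis using L1 by simp
      next
        case False
        obtain hV: "finite V" "V \<subseteq> H" "symmetric_set G V" "generate G V = H" "card U \<le> d * card V"
          "\<And>N. card (set_power G V N) \<le> (m * N + 1) * card (set_power G U N) ^ m"
          using main_comb[OF assms(3,2) Une assms(4,5,6,7,8) m_def V_def] by blast
        have h1: "real (card (set_power G V N)) \<ge> (\<alpha> * real (card V)) powr (\<beta> * real N)"
          using assms(11) hV(1-4) by blast
        have "x \<le> \<alpha> * real (card V)"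
        proof -
          have "real (card U) \<le> real d * real (card V)" using hV(5) by (metis of_nat_le_iff of_nat_mult)
          then have "real (card U) / real d \<le> real (card V)" using dpos by (simp add: field_simps)
          then have "\<alpha> * (real (card U) / real d) \<le> \<alpha> * real (card V)"
            by (rule mult_left_mono) (use assms(9) in simp)
          then show ?thesis unfolding x_def by simp
        qed
        then have h2: "x powr (\<beta> * real N) \<le> (\<alpha> * real (card V)) powr (\<beta> * real N)"
          using xpos assms(10) by (intro powr_mono2) auto
        have h3: "real (card (set_power G V N)) \<le> real (m * N + 1) * L ^ m"
          unfolding L_def using hV(6)[of N] by (metis of_nat_le_iff of_nat_mult of_nat_power)
        have "m * N + 1 \<le> 2 ^ (m * N)" using less_exp[of "m * N"] by (simp only: Suc_eq_plus1[symmetric] Suc_le_eq)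
        then have h4: "real (m * N + 1) \<le> 2 ^ (m * N)" by (metis of_nat_le_iff of_nat_numeral of_nat_power)
        have "x powr (\<beta> * real N) \<le> 2 ^ (m * N) * L ^ m"
          using h1 h2 h3 h4 L1 by (smt (verit) mult_right_mono zero_le_power)
        moreover have "y ^ m = x powr (\<beta> * real N) / 2 ^ (m * N)"
          unfolding y_def using xpos mpos
          by (simp add: power_divide powr_power power_mult[symmetric] mult.commute)
        moreover have P: "(2::real) ^ (m * N) > 0" by simp
        ultimately have "y ^ m \<le> (2 ^ (m * N) * L ^ m) / 2 ^ (m * N)"
          by (metis divide_right_mono less_imp_le)
        then have "y ^ m \<le> L ^ m" using P by simp
        moreover have "m = Suc (2 * fact d)" unfolding m_def by simp
        ultimately show "y \<le> L" using L1 power_le_imp_le_base by (metis le_numeral_extra(1) order_trans zero_le_one)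
      qed
      then show ?thesis using base rhs unfolding L_def m_def by simp
    qed
  qed
qed

end
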